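(* Let $(L,I)$ and $(M,J)$ be integral systems on sets $X$ and $Y$ respectively, let $\rho:X\to[0,\infty)$ and let $\phi:X\to Y$ be a map such that $\rho\cdot(g\circ\phi)\in L$ and $I(\rho\cdot(g\circ\phi))=J(g)$ for every $g\in M$. Then for every $g\in M^1$ one has $\rho\cdot(g\circ\phi)\in L^1$ and $I^1(\rho\cdot(g\circ\phi))=J^1(g)$.
   Context: An integral system $(L,I)$ on a set $X$ consists of a linear lattice $L$ (a real vector space of real-valued functions on $X$ closed under pointwise $\max$ and $\min$) and a preintegral $I$ (a positive linear functional on $L$ with $I(f_n)\to0$ whenever $f_n\in L$, $f_n\downarrow0$ pointwise). $L_\uparrow$ (resp. $L_\downarrow$) is the set of $f:X\to(-\infty,\infty]$ (resp. $[-\infty,\infty)$) that are pointwise limits of increasing (resp. decreasing) sequences $f_n\in L$, with $I_\uparrow(f)$ (resp. $I_\downarrow(f)$) $=\lim I(f_n)$. Upper and lower integrals: $\overline I(f)=\inf\{I_\uparrow(g):g\in L_\uparrow,f\le g\}$, $\underline I(f)=\sup\{I_\downarrow(g):g\in L_\downarrow,g\le f\}$. A function $f:X\to\mathbb R$ is integrable if $\underline I(f)=\overline I(f)\in\mathbb R$; $L^1$ is the set of integrable functions and $I^1(f)$ the common value (Daniell extension). $(M^1,J^1)$ is defined in the same way from $(M,J)$. Convention: $0\cdot(\pm\infty)=0$. *)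

theory Defs
  imports Complex_Main "HOL-Library.Extended_Real"
begin

definition linear_lattice :: "('a \<Rightarrow> real) set \<Rightarrow> bool" where
  "linear_lattice L \<longleftrightarrow>
     (\<lambda>x. 0) \<in> L \<and>
     (\<forall>f\<in>L. \<forall>g\<in>L. (\<lambda>x. f x + g x) \<in> L) \<and>
     (\<forall>f\<in>L. \<forall>c::real. (\<lambda>x. c * f x) \<in> L) \<and>
     (\<forall>f\<in>L. \<forall>g\<in>L. (\<lambda>x. max (f x) (g x)) \<in> L \<and> (\<lambda>x. min (f x) (g x)) \<in> L)"

definition preintegral :: "('a \<Rightarrow> real) set \<Rightarrow> (('a \<Rightarrow> real) \<Rightarrow> real) \<Rightarrow> bool" where
  "preintegral L I \<longleftrightarrow>
     (\<forall>f\<in>L. \<forall>g\<in>L. I (\<lambda>x. f x + g x) = I f + I g) \<and>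
     (\<forall>f\<in>L. \<forall>c::real. I (\<lambda>x. c * f x) = c * I f) \<and>
     (\<forall>f\<in>L. (\<forall>x. 0 \<le> f x) \<longrightarrow> 0 \<le> I f) \<and>
     (\<forall>f::nat \<Rightarrow> 'a \<Rightarrow> real. (\<forall>n. f n \<in> L) \<and> (\<forall>n x. f (Suc n) x \<le> f n x) \<and>
        (\<forall>x. (\<lambda>n. f n x) \<longlonglongrightarrow> 0) \<longrightarrow> (\<lambda>n. I (f n)) \<longlonglongrightarrow> 0)"

definition integral_system :: "('a \<Rightarrow> real) set \<Rightarrow> (('a \<Rightarrow> real) \<Rightarrow> real) \<Rightarrow> bool" where
  "integral_system L I \<longleftrightarrow> linear_lattice L \<and> preintegral L I"

definition incr_approx :: "('a \<Rightarrow> real) set \<Rightarrow> (nat \<Rightarrow> 'a \<Rightarrow> real) \<Rightarrow> ('a \<Rightarrow> ereal) \<Rightarrow> bool" where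
  "incr_approx L fs f \<longleftrightarrow> (\<forall>n. fs n \<in> L) \<and> (\<forall>n x. fs n x \<le> fs (Suc n) x) \<and>
     (\<forall>x. (\<lambda>n. ereal (fs n x)) \<longlonglongrightarrow> f x)"

definition decr_approx :: "('a \<Rightarrow> real) set \<Rightarrow> (nat \<Rightarrow> 'a \<Rightarrow> real) \<Rightarrow> ('a \<Rightarrow> ereal) \<Rightarrow> bool" where
  "decr_approx L fs f \<longleftrightarrow> (\<forall>n. fs n \<in> L) \<and> (\<forall>n x. fs (Suc n) x \<le> fs n x) \<and>
     (\<forall>x. (\<lambda>n. ereal (fs n x)) \<longlonglongrightarrow> f x)"

definition L_up :: "('a \<Rightarrow> real) set \<Rightarrow> ('a \<Rightarrow> ereal) set" where
  "L_up L = {f. \<exists>fs. incr_approx L fs f}"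

definition L_down :: "('a \<Rightarrow> real) set \<Rightarrow> ('a \<Rightarrow> ereal) set" where
  "L_down L = {f. \<exists>fs. decr_approx L fs f}"

text \<open>I_up f = lim I(f_n) for any increasing approximating sequence
  (independent of the choice of sequence for a preintegral).\<close>
definition I_up :: "('a \<Rightarrow> real) set \<Rightarrow> (('a \<Rightarrow> real) \<Rightarrow> real) \<Rightarrow> ('a \<Rightarrow> ereal) \<Rightarrow> ereal" where
  "I_up L I f = (SOME v. \<exists>fs. incr_approx L fs f \<and> (\<lambda>n. ereal (I (fs n))) \<longlonglongrightarrow> v)"

definition I_down :: "('a \<Rightarrow> real) set \<Rightarrow> (('a \<Rightarrow> real) \<Rightarrow> real) \<Rightarrow> ('a \<Rightarrow> ereal) \<Rightarrow> ereal" where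
  "I_down L I f = (SOME v. \<exists>fs. decr_approx L fs f \<and> (\<lambda>n. ereal (I (fs n))) \<longlonglongrightarrow> v)"

definition upper_integral :: "('a \<Rightarrow> real) set \<Rightarrow> (('a \<Rightarrow> real) \<Rightarrow> real) \<Rightarrow> ('a \<Rightarrow> ereal) \<Rightarrow> ereal" where
  "upper_integral L I f = Inf {I_up L I g | g. g \<in> L_up L \<and> (\<forall>x. f x \<le> g x)}"

definition lower_integral :: "('a \<Rightarrow> real) set \<Rightarrow> (('a \<Rightarrow> real) \<Rightarrow> real) \<Rightarrow> ('a \<Rightarrow> ereal) \<Rightarrow> ereal" where
  "lower_integral L I f = Sup {I_down L I g | g. g \<in> L_down L \<and> (\<forall>x. g x \<le> f x)}"

definition L1 :: "('a \<Rightarrow> real) set \<Rightarrow> (('a \<Rightarrow> real) \<Rightarrow> real) \<Rightarrow> ('a \<Rightarrow> real) set" where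
  "L1 L I = {f. lower_integral L I (\<lambda>x. ereal (f x)) = upper_integral L I (\<lambda>x. ereal (f x))
               \<and> \<bar>upper_integral L I (\<lambda>x. ereal (f x))\<bar> \<noteq> \<infinity>}"

definition I1 :: "('a \<Rightarrow> real) set \<Rightarrow> (('a \<Rightarrow> real) \<Rightarrow> real) \<Rightarrow> ('a \<Rightarrow> real) \<Rightarrow> real" where
  "I1 L I f = real_of_ereal (upper_integral L I (\<lambda>x. ereal (f x)))"

end

theory Submission
  imports Defs
begin

lemma is_unf: "integral_system L I \<Longrightarrow>
     (\<lambda>x. 0) \<in> L \<and>
     (\<forall>f\<in>L. \<forall>g\<in>L. (\<lambda>x. f x + g x) \<in> L) \<and>
     (\<forall>f\<in>L. \<forall>c::real. (\<lambda>x. c * f x) \<in> L) \<and>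
     (\<forall>f\<in>L. \<forall>g\<in>L. (\<lambda>x. max (f x) (g x)) \<in> L \<and> (\<lambda>x. min (f x) (g x)) \<in> L) \<and>
     (\<forall>f\<in>L. \<forall>g\<in>L. I (\<lambda>x. f x + g x) = I f + I g) \<and>
     (\<forall>f\<in>L. \<forall>c::real. I (\<lambda>x. c * f x) = c * I f) \<and>
     (\<forall>f\<in>L. (\<forall>x. 0 \<le> f x) \<longrightarrow> 0 \<le> I f) \<and>
     (\<forall>f::nat \<Rightarrow> 'a \<Rightarrow> real. (\<forall>n. f n \<in> L) \<and> (\<forall>n x. f (Suc n) x \<le> f n x) \<and>
        (\<forall>x. (\<lambda>n. f n x) \<longlonglongrightarrow> 0) \<longrightarrow> (\<lambda>n. I (f n)) \<longlonglongrightarrow> 0)"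
  unfolding integral_system_def linear_lattice_def preintegral_def by (elim conjE) (intro conjI)

lemma is_add: "integral_system L I \<Longrightarrow> f \<in> L \<Longrightarrow> g \<in> L \<Longrightarrow> (\<lambda>x. f x + g x) \<in> L"
  using is_unf by blast
lemma is_smult: "integral_system L I \<Longrightarrow> f \<in> L \<Longrightarrow> (\<lambda>x. c * f x) \<in> L"
  using is_unf by blast
lemma is_max: "integral_system L I \<Longrightarrow> f \<in> L \<Longrightarrow> g \<in> L \<Longrightarrow> (\<lambda>x. max (f x) (g x)) \<in> L"
  using is_unf by blast
lemma is_zero: "integral_system L I \<Longrightarrow> (\<lambda>x. 0) \<in> L"
  using is_unf by blast
lemma is_Iadd: "integral_system L I \<Longrightarrow> f \<in> L \<Longrightarrow> g \<in> L \<Longrightarrow> I (\<lambda>x. f x + g x) = I f + I g"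
  using is_unf by blast
lemma is_Ismult: "integral_system L I \<Longrightarrow> f \<in> L \<Longrightarrow> I (\<lambda>x. c * f x) = c * I f"
  using is_unf by blast
lemma is_pos: "integral_system L I \<Longrightarrow> f \<in> L \<Longrightarrow> (\<forall>x. 0 \<le> f x) \<Longrightarrow> 0 \<le> I f"
  using is_unf by blast
lemma is_cont: "integral_system L I \<Longrightarrow> (\<forall>n. fs n \<in> L) \<Longrightarrow> (\<forall>n x. fs (Suc n) x \<le> fs n x) \<Longrightarrow>
        (\<forall>x. (\<lambda>n. fs n x) \<longlonglongrightarrow> 0) \<Longrightarrow> (\<lambda>n. I (fs n)) \<longlonglongrightarrow> 0"
  using is_unf by blast

lemma is_diff:
  assumes "integral_system L I" "f \<in> L" "g \<in> L"
  shows "(\<lambda>x. f x - g x) \<in> L" "I (\<lambda>x. f x - g x) = I f - I g"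
proof -
  have m: "(\<lambda>x. (-1) * g x) \<in> L" using is_smult[OF assms(1) assms(3)] .
  have e: "(\<lambda>x. f x - g x) = (\<lambda>x. f x + (-1) * g x)" by auto
  show "(\<lambda>x. f x - g x) \<in> L" unfolding e using is_add[OF assms(1) assms(2) m] .
  show "I (\<lambda>x. f x - g x) = I f - I g" unfolding e
    using is_add is_Iadd[OF assms(1) assms(2) m] is_Ismult[OF assms(1) assms(3), of "-1"] by simp
qed

lemma is_mono:
  assumes "integral_system L I" "f \<in> L" "g \<in> L" "\<forall>x. f x \<le> g x"
  shows "I f \<le> I g"
  using is_pos[OF assms(1) is_diff(1)[OF assms(1,3,2)]] is_diff(2)[OF assms(1,3,2)] assms(4)
  by simp

lemma core:
  assumes "integral_system L I" "\<forall>m. u m \<in> L" "\<forall>m x. u (Suc m) x \<le> u m x"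
    and "\<forall>x \<epsilon>. \<epsilon> > 0 \<longrightarrow> (\<exists>m. u m x < \<epsilon>)"
    and "\<forall>m. c \<le> I (u m)"
  shows "c \<le> (0::real)"
proof -
  define e where "e m = (\<lambda>x. max (u m x) 0)" for m
  have eL: "e m \<in> L" for m unfolding e_def using is_max[OF assms(1) _ is_zero[OF assms(1)]] assms(2) by blast
  have dec: "e (Suc m) x \<le> e m x" for m x using assms(3) unfolding e_def by (simp add: max.coboundedI1)
  have mono: "u m x \<le> u k x" if "k \<le> m" for k m x
    using lift_Suc_antimono_le[of "\<lambda>k. u k x"] assms(3) that by blast
  have lim: "(\<lambda>m. e m x) \<longlonglongrightarrow> 0" for x
  proof (rule LIMSEQ_I)
    fix r :: real assume r: "0 < r"
    then obtain m where m: "u m x < r" using assms(4) by blast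
    show "\<exists>no. \<forall>n\<ge>no. norm (e n x - 0) < r"
    proof (intro exI allI impI)
      fix n assume "m \<le> n"
      then have "u n x \<le> u m x" using mono by blast
      then show "norm (e n x - 0) < r" using m r unfolding e_def by auto
    qed
  qed
  have IL: "(\<lambda>m. I (e m)) \<longlonglongrightarrow> 0"
    using is_cont[OF assms(1), of e] eL dec lim by blast
  have "c \<le> I (e m)" for m
  proof -
    have "I (u m) \<le> I (e m)" using is_mono[OF assms(1) assms(2)[rule_format] eL] unfolding e_def by auto
    then show ?thesis using assms(5)[rule_format, of m] by linarith
  qed
  then show ?thesis using LIMSEQ_le_const[OF IL] by blast
qed


lemma ev_ex: "eventually P sequentially \<Longrightarrow> (\<And>m. P m \<Longrightarrow> thesis) \<Longrightarrow> thesis"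
proof -
  assume "eventually P sequentially" and t: "\<And>m. P m \<Longrightarrow> thesis"
  then obtain N where "\<forall>n\<ge>N. P n" unfolding eventually_sequentially by blast
  then have "P N" by blast
  then show thesis by (rule t)
qed

lemma ia_le: "incr_approx L fs f \<Longrightarrow> ereal (fs n x) \<le> f x"
  unfolding incr_approx_def
proof (elim conjE)
  assume m: "\<forall>n x. fs n x \<le> fs (Suc n) x" and c: "\<forall>x. (\<lambda>n. ereal (fs n x)) \<longlonglongrightarrow> f x"
  have "\<forall>k\<ge>n. ereal (fs n x) \<le> ereal (fs k x)"
    using lift_Suc_mono_le[of "\<lambda>k. fs k x"] m by simp
  then show ?thesis using LIMSEQ_le_const[OF c[rule_format, of x]] by blast
qed

lemma da_ge: "decr_approx L fs f \<Longrightarrow> f x \<le> ereal (fs n x)"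
  unfolding decr_approx_def
proof (elim conjE)
  assume m: "\<forall>n x. fs (Suc n) x \<le> fs n x" and c: "\<forall>x. (\<lambda>n. ereal (fs n x)) \<longlonglongrightarrow> f x"
  have "\<forall>k\<ge>n. ereal (fs k x) \<le> ereal (fs n x)"
    using lift_Suc_antimono_le[of "\<lambda>k. fs k x"] m by simp
  then show ?thesis using LIMSEQ_le_const2[OF c[rule_format, of x]] by blast
qed

lemma incr_le:
  assumes IS: "integral_system L I" and A: "incr_approx L fs f" and B: "incr_approx L hs h"
    and le: "\<forall>x. f x \<le> h x"
  shows "(SUP n. ereal (I (fs n))) \<le> (SUP m. ereal (I (hs m)))"
proof (rule SUP_least)
  fix n
  let ?S = "SUP m. ereal (I (hs m))"
  show "ereal (I (fs n)) \<le> ?S"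
  proof (cases "?S = \<infinity>")
    case True then show ?thesis by simp
  next
    case False
    have "ereal (I (hs 0)) \<le> ?S" by (rule SUP_upper) auto
    then obtain s where s: "?S = ereal s" using False by (cases ?S) auto
    have hs_le: "I (hs m) \<le> s" for m
    proof -
      have "ereal (I (hs m)) \<le> ?S" by (rule SUP_upper) auto
      then show ?thesis using s by simp
    qed
    have fsL: "fs n \<in> L" and hsL: "\<forall>m. hs m \<in> L" and hm: "\<forall>m x. hs m x \<le> hs (Suc m) x"
      and hc: "\<forall>x. (\<lambda>m. ereal (hs m x)) \<longlonglongrightarrow> h x"
      using A B unfolding incr_approx_def by auto
    have "I (fs n) - s \<le> 0"
    proof (rule core[OF IS, of "\<lambda>m x. fs n x - hs m x"])
      show "\<forall>m. (\<lambda>x. fs n x - hs m x) \<in> L" using is_diff(1)[OF IS fsL] hsL by blast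
      show "\<forall>m x. fs n x - hs (Suc m) x \<le> fs n x - hs m x" using hm by (simp add: algebra_simps)
      show "\<forall>x \<epsilon>. \<epsilon> > 0 \<longrightarrow> (\<exists>m. fs n x - hs m x < \<epsilon>)"
      proof (intro allI impI)
        fix x and \<epsilon> :: real assume e: "\<epsilon> > 0"
        have "ereal (fs n x - \<epsilon>) < h x"
        proof -
          have "ereal (fs n x - \<epsilon>) < ereal (fs n x)" using e by simp
          also have "\<dots> \<le> f x" using ia_le[OF A, of n x] .
          also have "\<dots> \<le> h x" using le by blast
          finally show ?thesis .
        qed
        then have "eventually (\<lambda>m. ereal (fs n x - \<epsilon>) < ereal (hs m x)) sequentially"
          using order_tendstoD(1)[OF hc[rule_format, of x]] by blast
        then obtain m where "ereal (fs n x - \<epsilon>) < ereal (hs m x)"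
          by (rule ev_ex)
        then have "fs n x - hs m x < \<epsilon>" by simp
        then show "\<exists>m. fs n x - hs m x < \<epsilon>" by blast
      qed
      show "\<forall>m. I (fs n) - s \<le> I (\<lambda>x. fs n x - hs m x)"
      proof
        fix m
        have "I (\<lambda>x. fs n x - hs m x) = I (fs n) - I (hs m)" using is_diff(2)[OF IS fsL] hsL by blast
        then show "I (fs n) - s \<le> I (\<lambda>x. fs n x - hs m x)" using hs_le[of m] by simp
      qed
    qed
    then show ?thesis using s by simp
  qed
qed


lemma decr_le:
  assumes IS: "integral_system L I" and A: "decr_approx L gs g" and B: "decr_approx L ks k"
    and le: "\<forall>x. g x \<le> k x"
  shows "(INF n. ereal (I (gs n))) \<le> (INF m. ereal (I (ks m)))"
proof (rule INF_greatest)
  fix m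
  let ?T = "INF n. ereal (I (gs n))"
  show "?T \<le> ereal (I (ks m))"
  proof (cases "?T = -\<infinity>")
    case True then show ?thesis by simp
  next
    case False
    have "?T \<le> ereal (I (gs 0))" by (rule INF_lower) auto
    then obtain t where t: "?T = ereal t" using False by (cases ?T) auto
    have gs_ge: "t \<le> I (gs n)" for n
    proof -
      have "?T \<le> ereal (I (gs n))" by (rule INF_lower) auto
      then show ?thesis using t by simp
    qed
    have ksL: "ks m \<in> L" and gsL: "\<forall>n. gs n \<in> L" and gm: "\<forall>n x. gs (Suc n) x \<le> gs n x"
      and gc: "\<forall>x. (\<lambda>n. ereal (gs n x)) \<longlonglongrightarrow> g x"
      using A B unfolding decr_approx_def by auto
    have "t - I (ks m) \<le> 0"
    proof (rule core[OF IS, of "\<lambda>n x. gs n x - ks m x"])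
      show "\<forall>n. (\<lambda>x. gs n x - ks m x) \<in> L" using is_diff(1)[OF IS _ ksL] gsL by blast
      show "\<forall>n x. gs (Suc n) x - ks m x \<le> gs n x - ks m x" using gm by (simp add: algebra_simps)
      show "\<forall>x \<epsilon>. \<epsilon> > 0 \<longrightarrow> (\<exists>n. gs n x - ks m x < \<epsilon>)"
      proof (intro allI impI)
        fix x and \<epsilon> :: real assume e: "\<epsilon> > 0"
        have "g x < ereal (ks m x + \<epsilon>)"
        proof -
          have "g x \<le> k x" using le by blast
          also have "\<dots> \<le> ereal (ks m x)" using da_ge[OF B] .
          also have "\<dots> < ereal (ks m x + \<epsilon>)" using e by simp
          finally show ?thesis .
        qed
        then have "eventually (\<lambda>n. ereal (gs n x) < ereal (ks m x + \<epsilon>)) sequentially"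
          using order_tendstoD(2)[OF gc[rule_format, of x]] by blast
        then obtain n where "ereal (gs n x) < ereal (ks m x + \<epsilon>)"
          by (rule ev_ex)
        then have "gs n x - ks m x < \<epsilon>" by simp
        then show "\<exists>n. gs n x - ks m x < \<epsilon>" by blast
      qed
      show "\<forall>n. t - I (ks m) \<le> I (\<lambda>x. gs n x - ks m x)"
      proof
        fix n
        have "I (\<lambda>x. gs n x - ks m x) = I (gs n) - I (ks m)" using is_diff(2)[OF IS _ ksL] gsL by blast
        then show "t - I (ks m) \<le> I (\<lambda>x. gs n x - ks m x)" using gs_ge[of n] by simp
      qed
    qed
    then show ?thesis using t by simp
  qed
qed

lemma mixed_pt:
  assumes A: "decr_approx L gs g" and B: "incr_approx L hs h" and le: "g x \<le> h x"
    and e: "(\<epsilon>::real) > 0"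
  shows "\<exists>m. gs m x - hs m x < \<epsilon>"
proof -
  obtain r where r1: "g x < ereal (r + \<epsilon>/2)" and r2: "ereal (r - \<epsilon>/2) < h x"
  proof (cases "g x")
    case (real a)
    show thesis
    proof (rule that[of a])
      show "g x < ereal (a + \<epsilon>/2)" using real e by simp
      have "ereal (a - \<epsilon>/2) < g x" using real e by simp
      then show "ereal (a - \<epsilon>/2) < h x" using le by (rule less_le_trans)
    qed
  next
    case PInf
    then show thesis using da_ge[OF A, of x 0] by simp
  next
    case MInf
    show thesis
    proof (rule that[of "hs 0 x - 1 + \<epsilon>/2"])
      show "g x < ereal (hs 0 x - 1 + \<epsilon> / 2 + \<epsilon> / 2)" using MInf by simp
      have "ereal (hs 0 x - 1 + \<epsilon> / 2 - \<epsilon> / 2) < ereal (hs 0 x)" by simp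
      also have "\<dots> \<le> h x" using ia_le[OF B] .
      finally show "ereal (hs 0 x - 1 + \<epsilon> / 2 - \<epsilon> / 2) < h x" .
    qed
  qed
  have gc: "(\<lambda>n. ereal (gs n x)) \<longlonglongrightarrow> g x" using A unfolding decr_approx_def by auto
  have hc: "(\<lambda>n. ereal (hs n x)) \<longlonglongrightarrow> h x" using B unfolding incr_approx_def by auto
  have "eventually (\<lambda>n. ereal (gs n x) < ereal (r + \<epsilon>/2) \<and> ereal (r - \<epsilon>/2) < ereal (hs n x)) sequentially"
    using order_tendstoD(2)[OF gc r1] order_tendstoD(1)[OF hc r2] by (rule eventually_conj)
  then obtain m where "ereal (gs m x) < ereal (r + \<epsilon>/2) \<and> ereal (r - \<epsilon>/2) < ereal (hs m x)"
    by (rule ev_ex)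
  then have "gs m x - hs m x < \<epsilon>" by simp
  then show ?thesis by blast
qed

lemma mixed_le:
  assumes IS: "integral_system L I" and A: "decr_approx L gs g" and B: "incr_approx L hs h"
    and le: "\<forall>x. g x \<le> h x"
  shows "(INF n. ereal (I (gs n))) \<le> (SUP m. ereal (I (hs m)))"
proof -
  let ?T = "INF n. ereal (I (gs n))"
  let ?S = "SUP m. ereal (I (hs m))"
  show ?thesis
  proof (cases "?T = -\<infinity> \<or> ?S = \<infinity>")
    case True then show ?thesis by auto
  next
    case False
    have "?T \<le> ereal (I (gs 0))" by (rule INF_lower) auto
    then obtain t where t: "?T = ereal t" using False by (cases ?T) auto
    have "ereal (I (hs 0)) \<le> ?S" by (rule SUP_upper) auto
    then obtain s where s: "?S = ereal s" using False by (cases ?S) auto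
    have gs_ge: "t \<le> I (gs n)" for n
    proof -
      have "?T \<le> ereal (I (gs n))" by (rule INF_lower) auto
      then show ?thesis using t by simp
    qed
    have hs_le: "I (hs m) \<le> s" for m
    proof -
      have "ereal (I (hs m)) \<le> ?S" by (rule SUP_upper) auto
      then show ?thesis using s by simp
    qed
    have gsL: "\<forall>n. gs n \<in> L" and gm: "\<forall>n x. gs (Suc n) x \<le> gs n x"
      using A unfolding decr_approx_def by auto
    have hsL: "\<forall>n. hs n \<in> L" and hm: "\<forall>n x. hs n x \<le> hs (Suc n) x"
      using B unfolding incr_approx_def by auto
    have "t - s \<le> 0"
    proof (rule core[OF IS, of "\<lambda>n x. gs n x - hs n x"])
      show "\<forall>n. (\<lambda>x. gs n x - hs n x) \<in> L" using is_diff(1)[OF IS] gsL hsL by blast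
      show "\<forall>n x. gs (Suc n) x - hs (Suc n) x \<le> gs n x - hs n x"
      proof (intro allI)
        fix n x
        have "gs (Suc n) x \<le> gs n x" "hs n x \<le> hs (Suc n) x" using gm hm by blast+
        then show "gs (Suc n) x - hs (Suc n) x \<le> gs n x - hs n x" by linarith
      qed
      show "\<forall>x \<epsilon>. \<epsilon> > 0 \<longrightarrow> (\<exists>n. gs n x - hs n x < \<epsilon>)"
        using mixed_pt[OF A B] le by blast
      show "\<forall>n. t - s \<le> I (\<lambda>x. gs n x - hs n x)"
      proof
        fix n
        have "I (\<lambda>x. gs n x - hs n x) = I (gs n) - I (hs n)" using is_diff(2)[OF IS] gsL hsL by blast
        then show "t - s \<le> I (\<lambda>x. gs n x - hs n x)" using gs_ge[of n] hs_le[of n] by simp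
      qed
    qed
    then show ?thesis using t s by simp
  qed
qed

lemma ia_incseq:
  assumes IS: "integral_system L I" and A: "incr_approx L fs f"
  shows "incseq (\<lambda>n. ereal (I (fs n)))"
proof (rule incseq_SucI)
  fix n show "ereal (I (fs n)) \<le> ereal (I (fs (Suc n)))"
    using is_mono[OF IS] A unfolding incr_approx_def by simp
qed

lemma da_decseq:
  assumes IS: "integral_system L I" and A: "decr_approx L fs f"
  shows "decseq (\<lambda>n. ereal (I (fs n)))"
proof (rule decseq_SucI)
  fix n show "ereal (I (fs (Suc n))) \<le> ereal (I (fs n))"
    using is_mono[OF IS] A unfolding decr_approx_def by simp
qed

lemma I_up_eq:
  assumes IS: "integral_system L I" and A: "incr_approx L fs f"
  shows "I_up L I f = (SUP n. ereal (I (fs n)))"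
proof -
  have ex: "\<exists>v. \<exists>fs. incr_approx L fs f \<and> (\<lambda>n. ereal (I (fs n))) \<longlonglongrightarrow> v"
    using LIMSEQ_SUP[OF ia_incseq[OF IS A]] A by blast
  have "\<exists>gs. incr_approx L gs f \<and> (\<lambda>n. ereal (I (gs n))) \<longlonglongrightarrow> I_up L I f"
    unfolding I_up_def by (rule someI_ex[OF ex])
  then obtain gs where gs: "incr_approx L gs f" and lim: "(\<lambda>n. ereal (I (gs n))) \<longlonglongrightarrow> I_up L I f"
    by blast
  have "I_up L I f = (SUP n. ereal (I (gs n)))"
    using LIMSEQ_unique[OF lim LIMSEQ_SUP[OF ia_incseq[OF IS gs]]] .
  also have "\<dots> = (SUP n. ereal (I (fs n)))"
    using incr_le[OF IS gs A] incr_le[OF IS A gs] by auto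
  finally show ?thesis .
qed

lemma I_down_eq:
  assumes IS: "integral_system L I" and A: "decr_approx L fs f"
  shows "I_down L I f = (INF n. ereal (I (fs n)))"
proof -
  have ex: "\<exists>v. \<exists>fs. decr_approx L fs f \<and> (\<lambda>n. ereal (I (fs n))) \<longlonglongrightarrow> v"
    using LIMSEQ_INF[OF da_decseq[OF IS A]] A by blast
  have "\<exists>gs. decr_approx L gs f \<and> (\<lambda>n. ereal (I (gs n))) \<longlonglongrightarrow> I_down L I f"
    unfolding I_down_def by (rule someI_ex[OF ex])
  then obtain gs where gs: "decr_approx L gs f" and lim: "(\<lambda>n. ereal (I (gs n))) \<longlonglongrightarrow> I_down L I f"
    by blast
  have "I_down L I f = (INF n. ereal (I (gs n)))"
    using LIMSEQ_unique[OF lim LIMSEQ_INF[OF da_decseq[OF IS gs]]] .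
  also have "\<dots> = (INF n. ereal (I (fs n)))"
    using decr_le[OF IS gs A] decr_le[OF IS A gs] by auto
  finally show ?thesis .
qed


lemma transfer_conv:
  assumes "\<forall>x. 0 \<le> \<rho> x" and "\<forall>x. (\<lambda>n. ereal (hs n x)) \<longlonglongrightarrow> h x"
  shows "(\<lambda>n. ereal (\<rho> x * hs n (\<phi> x))) \<longlonglongrightarrow> ereal (\<rho> x) * h (\<phi> x)"
proof -
  have "(\<lambda>n. ereal (\<rho> x) * ereal (hs n (\<phi> x))) \<longlonglongrightarrow> ereal (\<rho> x) * h (\<phi> x)"
    by (rule tendsto_cmult_ereal) (use assms(2) in auto)
  then show ?thesis by simp
qed

lemma up_transfer:
  assumes ISL: "integral_system L I" and ISM: "integral_system M J"
    and rho: "\<forall>x. 0 \<le> \<rho> x"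
    and tr: "\<forall>g\<in>M. (\<lambda>x. \<rho> x * g (\<phi> x)) \<in> L \<and> I (\<lambda>x. \<rho> x * g (\<phi> x)) = J g"
    and H: "incr_approx M hs h"
  shows "incr_approx L (\<lambda>n x. \<rho> x * hs n (\<phi> x)) (\<lambda>x. ereal (\<rho> x) * h (\<phi> x))"
    and "I_up L I (\<lambda>x. ereal (\<rho> x) * h (\<phi> x)) = I_up M J h"
proof -
  have hsM: "\<forall>n. hs n \<in> M" and hm: "\<forall>n x. hs n x \<le> hs (Suc n) x"
    and hc: "\<forall>x. (\<lambda>n. ereal (hs n x)) \<longlonglongrightarrow> h x"
    using H unfolding incr_approx_def by auto
  show A: "incr_approx L (\<lambda>n x. \<rho> x * hs n (\<phi> x)) (\<lambda>x. ereal (\<rho> x) * h (\<phi> x))"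
    unfolding incr_approx_def
  proof (intro conjI allI)
    fix n show "(\<lambda>x. \<rho> x * hs n (\<phi> x)) \<in> L" using tr hsM by blast
  next
    fix n x show "\<rho> x * hs n (\<phi> x) \<le> \<rho> x * hs (Suc n) (\<phi> x)"
      using hm rho by (simp add: mult_left_mono)
  next
    fix x show "(\<lambda>n. ereal (\<rho> x * hs n (\<phi> x))) \<longlonglongrightarrow> ereal (\<rho> x) * h (\<phi> x)"
      using transfer_conv[OF rho hc] .
  qed
  have "I_up L I (\<lambda>x. ereal (\<rho> x) * h (\<phi> x)) = (SUP n. ereal (I (\<lambda>x. \<rho> x * hs n (\<phi> x))))"
    using I_up_eq[OF ISL A] .
  also have "\<dots> = (SUP n. ereal (J (hs n)))" using tr hsM by simp
  also have "\<dots> = I_up M J h" using I_up_eq[OF ISM H] by simp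
  finally show "I_up L I (\<lambda>x. ereal (\<rho> x) * h (\<phi> x)) = I_up M J h" .
qed

lemma down_transfer:
  assumes ISL: "integral_system L I" and ISM: "integral_system M J"
    and rho: "\<forall>x. 0 \<le> \<rho> x"
    and tr: "\<forall>g\<in>M. (\<lambda>x. \<rho> x * g (\<phi> x)) \<in> L \<and> I (\<lambda>x. \<rho> x * g (\<phi> x)) = J g"
    and H: "decr_approx M hs h"
  shows "decr_approx L (\<lambda>n x. \<rho> x * hs n (\<phi> x)) (\<lambda>x. ereal (\<rho> x) * h (\<phi> x))"
    and "I_down L I (\<lambda>x. ereal (\<rho> x) * h (\<phi> x)) = I_down M J h"
proof -
  have hsM: "\<forall>n. hs n \<in> M" and hm: "\<forall>n x. hs (Suc n) x \<le> hs n x"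
    and hc: "\<forall>x. (\<lambda>n. ereal (hs n x)) \<longlonglongrightarrow> h x"
    using H unfolding decr_approx_def by auto
  show A: "decr_approx L (\<lambda>n x. \<rho> x * hs n (\<phi> x)) (\<lambda>x. ereal (\<rho> x) * h (\<phi> x))"
    unfolding decr_approx_def
  proof (intro conjI allI)
    fix n show "(\<lambda>x. \<rho> x * hs n (\<phi> x)) \<in> L" using tr hsM by blast
  next
    fix n x show "\<rho> x * hs (Suc n) (\<phi> x) \<le> \<rho> x * hs n (\<phi> x)"
      using hm rho by (simp add: mult_left_mono)
  next
    fix x show "(\<lambda>n. ereal (\<rho> x * hs n (\<phi> x))) \<longlonglongrightarrow> ereal (\<rho> x) * h (\<phi> x)"
      using transfer_conv[OF rho hc] .
  qed
  have "I_down L I (\<lambda>x. ereal (\<rho> x) * h (\<phi> x)) = (INF n. ereal (I (\<lambda>x. \<rho> x * hs n (\<phi> x))))"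
    using I_down_eq[OF ISL A] .
  also have "\<dots> = (INF n. ereal (J (hs n)))" using tr hsM by simp
  also have "\<dots> = I_down M J h" using I_down_eq[OF ISM H] by simp
  finally show "I_down L I (\<lambda>x. ereal (\<rho> x) * h (\<phi> x)) = I_down M J h" .
qed

lemma lower_le_upper:
  assumes IS: "integral_system L I"
  shows "lower_integral L I f \<le> upper_integral L I f"
  unfolding lower_integral_def upper_integral_def
proof (rule Sup_least, rule Inf_greatest)
  fix a b
  assume "a \<in> {I_down L I g |g. g \<in> L_down L \<and> (\<forall>x. g x \<le> f x)}"
  then obtain g gs where a: "a = I_down L I g" and gs: "decr_approx L gs g" and gf: "\<forall>x. g x \<le> f x"
    unfolding L_down_def by blast
  assume "b \<in> {I_up L I g |g. g \<in> L_up L \<and> (\<forall>x. f x \<le> g x)}"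
  then obtain h hs where b: "b = I_up L I h" and hs: "incr_approx L hs h" and hf: "\<forall>x. f x \<le> h x"
    unfolding L_up_def by blast
  have "\<forall>x. g x \<le> h x" using gf hf order_trans by blast
  then show "a \<le> b" unfolding a b I_down_eq[OF IS gs] I_up_eq[OF IS hs]
    using mixed_le[OF IS gs hs] by blast
qed

theorem mainTheorem11:
  fixes L :: "('a \<Rightarrow> real) set" and I :: "('a \<Rightarrow> real) \<Rightarrow> real"
    and M :: "('b \<Rightarrow> real) set" and J :: "('b \<Rightarrow> real) \<Rightarrow> real"
    and \<rho> :: "'a \<Rightarrow> real" and \<phi> :: "'a \<Rightarrow> 'b"
  assumes "integral_system L I" and "integral_system M J"
    and "\<forall>x. 0 \<le> \<rho> x"
    and "\<forall>g\<in>M. (\<lambda>x. \<rho> x * g (\<phi> x)) \<in> L \<and> I (\<lambda>x. \<rho> x * g (\<phi> x)) = J g"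
  shows "\<forall>g\<in>L1 M J. (\<lambda>x. \<rho> x * g (\<phi> x)) \<in> L1 L I \<and>
           I1 L I (\<lambda>x. \<rho> x * g (\<phi> x)) = I1 M J g"
proof
  note ISL = assms(1) and ISM = assms(2) and rho = assms(3) and tr = assms(4)
  fix g assume g: "g \<in> L1 M J"
  define G where "G = (\<lambda>x. ereal (g x))"
  define F where "F = (\<lambda>x. ereal (\<rho> x * g (\<phi> x)))"
  define c where "c = upper_integral M J G"
  have lowc: "lower_integral M J G = c" and cfin: "\<bar>c\<bar> \<noteq> \<infinity>"
    using g unfolding L1_def G_def c_def by auto
  have U: "upper_integral L I F \<le> c"
    unfolding c_def upper_integral_def
  proof (rule Inf_greatest)
    fix e assume "e \<in> {I_up M J h |h. h \<in> L_up M \<and> (\<forall>x. G x \<le> h x)}"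
    then obtain h hs where e: "e = I_up M J h" and hs: "incr_approx M hs h" and Gh: "\<forall>x. G x \<le> h x"
      unfolding L_up_def by blast
    have "e \<in> {I_up L I k |k. k \<in> L_up L \<and> (\<forall>x. F x \<le> k x)}"
    proof (intro CollectI exI conjI)
      show "e = I_up L I (\<lambda>x. ereal (\<rho> x) * h (\<phi> x))"
        using e up_transfer(2)[OF ISL ISM rho tr hs] by simp
      show "(\<lambda>x. ereal (\<rho> x) * h (\<phi> x)) \<in> L_up L"
        using up_transfer(1)[OF ISL ISM rho tr hs] unfolding L_up_def by blast
      show "\<forall>x. F x \<le> ereal (\<rho> x) * h (\<phi> x)"
      proof
        fix x
        have "ereal (\<rho> x) * ereal (g (\<phi> x)) \<le> ereal (\<rho> x) * h (\<phi> x)"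
          using Gh rho unfolding G_def by (intro ereal_mult_left_mono) auto
        then show "F x \<le> ereal (\<rho> x) * h (\<phi> x)" unfolding F_def by simp
      qed
    qed
    then show "Inf {I_up L I k |k. k \<in> L_up L \<and> (\<forall>x. F x \<le> k x)} \<le> e" by (rule Inf_lower)
  qed
  have Lw: "c \<le> lower_integral L I F"
    unfolding lowc[symmetric] lower_integral_def
  proof (rule Sup_least)
    fix e assume "e \<in> {I_down M J h |h. h \<in> L_down M \<and> (\<forall>x. h x \<le> G x)}"
    then obtain h hs where e: "e = I_down M J h" and hs: "decr_approx M hs h" and Gh: "\<forall>x. h x \<le> G x"
      unfolding L_down_def by blast
    have "e \<in> {I_down L I k |k. k \<in> L_down L \<and> (\<forall>x. k x \<le> F x)}"
    proof (intro CollectI exI conjI)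
      show "e = I_down L I (\<lambda>x. ereal (\<rho> x) * h (\<phi> x))"
        using e down_transfer(2)[OF ISL ISM rho tr hs] by simp
      show "(\<lambda>x. ereal (\<rho> x) * h (\<phi> x)) \<in> L_down L"
        using down_transfer(1)[OF ISL ISM rho tr hs] unfolding L_down_def by blast
      show "\<forall>x. ereal (\<rho> x) * h (\<phi> x) \<le> F x"
      proof
        fix x
        have "ereal (\<rho> x) * h (\<phi> x) \<le> ereal (\<rho> x) * ereal (g (\<phi> x))"
          using Gh rho unfolding G_def by (intro ereal_mult_left_mono) auto
        then show "ereal (\<rho> x) * h (\<phi> x) \<le> F x" unfolding F_def by simp
      qed
    qed
    then show "e \<le> Sup {I_down L I k |k. k \<in> L_down L \<and> (\<forall>x. k x \<le> F x)}" by (rule Sup_upper)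
  qed
  have LU: "lower_integral L I F \<le> upper_integral L I F" by (rule lower_le_upper[OF ISL])
  have eqU: "upper_integral L I F = c" using U Lw LU by simp
  have eqL: "lower_integral L I F = c" using U Lw LU by simp
  show "(\<lambda>x. \<rho> x * g (\<phi> x)) \<in> L1 L I \<and> I1 L I (\<lambda>x. \<rho> x * g (\<phi> x)) = I1 M J g"
  proof
    show "(\<lambda>x. \<rho> x * g (\<phi> x)) \<in> L1 L I"
      unfolding L1_def using eqU eqL cfin unfolding F_def by simp
    show "I1 L I (\<lambda>x. \<rho> x * g (\<phi> x)) = I1 M J g"
      unfolding I1_def using eqU unfolding F_def c_def G_def by simp
  qed
qed

end
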